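(* Let $\alpha$ be an ordinal number such that either $\Pi(\Pi_\alpha\mathcal A)=\Pi_\alpha\mathcal A=\Sigma(\Pi_\alpha\mathcal A)$, or $\Pi(\Sigma_\alpha\mathcal A)=\Sigma_\alpha\mathcal A=\Sigma(\Sigma_\alpha\mathcal A)$. Then $\alpha$ is uncountable.
   Context: $\mathbb N=\{1,2,\dots\}$, and $\mathbb N^{\mathbb N}$ is the Baire space. For $m,n\in\mathbb N$ let $B^m_n=\{f\in\mathbb N^{\mathbb N}: f(n)=m\}$. $\mathcal A$ is the family of all sets $T_1\cup\dots\cup T_L$ ($L\in\mathbb N$), each $T_\ell$ a finite intersection $S_1\cap\dots\cap S_K$ ($K\in\mathbb N$) of sets of the form $B^m_n$ or $\mathbb N^{\mathbb N}\setminus B^m_n$. For a family $\mathcal X$ of subsets of $\mathbb N^{\mathbb N}$, $\Pi(\mathcal X)$ is the family of all countable intersections $\bigcap_n X_n$ and $\Sigma(\mathcal X)$ that of all countable unions $\bigcup_n X_n$ with $X_n\in\mathcal X$. Define by transfinite recursion $\Pi_0\mathcal A=\Sigma_0\mathcal A=\mathcal A$, $\Pi_{\beta+1}\mathcal A=\Pi(\Sigma_\beta\mathcal A)$, $\Sigma_{\beta+1}\mathcal A=\Sigma(\Pi_\beta\mathcal A)$, and for limit $\lambda$, $\Pi_\lambda\mathcal A=\bigcup_{\beta<\lambda}\Pi_\beta\mathcal A$, $\Sigma_\lambda\mathcal A=\bigcup_{\beta<\lambda}\Sigma_\beta\mathcal A$. (In the paper's terminology, the two hypotheses say that the hierarchy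 of extensions of the zero valuation on $\mathcal A$ has collapsed at $\Pi_\alpha\mathcal A$, resp. at $\Sigma_\alpha\mathcal A$.) *)

theory Defs
  imports Main "HOL-Library.Countable_Set"
begin

text \<open>Baire space: points are functions nat => nat. The paper's index set
  {1,2,...} is relabelled as {0,1,...} (coordinates and values shifted by one),
  which is an isomorphic copy of the Baire space.\<close>

type_synonym baire = "nat \<Rightarrow> nat"

definition Bset :: "nat \<Rightarrow> nat \<Rightarrow> baire set" where
  "Bset m n = {f. f n = m}"

definition literals :: "baire set set" where
  "literals = {Bset m n | m n. True} \<union> {- Bset m n | m n. True}"

definition conjs :: "baire set set" where
  "conjs = {\<Inter> (set l) | l. l \<noteq> [] \<and> set l \<subseteq> literals}"

definition algA :: "baire set set" where
  "algA = {\<Union> (set l) | l. l \<noteq> [] \<and> set l \<subseteq> conjs}"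

definition PiF :: "baire set set \<Rightarrow> baire set set" where
  "PiF X = {\<Inter> (range Y) | Y. \<forall>n::nat. Y n \<in> X}"

definition SigmaF :: "baire set set \<Rightarrow> baire set set" where
  "SigmaF X = {\<Union> (range Y) | Y. \<forall>n::nat. Y n \<in> X}"

text \<open>Ordinals are represented by elements of well-orders: the element a of
  the field of a well-order r stands for the ordinal which is the order type of
  the strict initial segment underS r a. The pair hier r a is
  (Pi_alpha A, Sigma_alpha A), defined by transfinite recursion.\<close>

definition hier_step ::
  "'b rel \<Rightarrow> ('b \<Rightarrow> baire set set \<times> baire set set) \<Rightarrow> 'b \<Rightarrow> baire set set \<times> baire set set" where
  "hier_step r h x =
     (if underS r x = {} then (algA, algA)
      else if (\<exists>b \<in> underS r x. \<forall>c \<in> underS r x. (c, b) \<in> r)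
      then (let b = (THE b. b \<in> underS r x \<and> (\<forall>c \<in> underS r x. (c, b) \<in> r))
            in (PiF (snd (h b)), SigmaF (fst (h b))))
      else (\<Union>b \<in> underS r x. fst (h b), \<Union>b \<in> underS r x. snd (h b)))"

definition hier :: "'b rel \<Rightarrow> 'b \<Rightarrow> baire set set \<times> baire set set" where
  "hier r = wfrec (r - Id) (hier_step r)"

definition PiH :: "'b rel \<Rightarrow> 'b \<Rightarrow> baire set set" where
  "PiH r a = fst (hier r a)"

definition SigmaH :: "'b rel \<Rightarrow> 'b \<Rightarrow> baire set set" where
  "SigmaH r a = snd (hier r a)"

end

theory Submission imports Defs "HOL-Library.Nat_Bijection" begin

lemma hs1: "underS r x = {} \<Longrightarrow> hier_step r h x = (algA, algA)"
  unfolding hier_step_def by (rule if_P)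

lemma hs2: "underS r x \<noteq> {} \<Longrightarrow> (\<exists>b \<in> underS r x. \<forall>c \<in> underS r x. (c, b) \<in> r) \<Longrightarrow>
  hier_step r h x = (PiF (snd (h (THE b. b \<in> underS r x \<and> (\<forall>c \<in> underS r x. (c, b) \<in> r)))),
                     SigmaF (fst (h (THE b. b \<in> underS r x \<and> (\<forall>c \<in> underS r x. (c, b) \<in> r)))))"
  unfolding hier_step_def Let_def by (subst if_not_P, assumption, rule if_P, assumption)

lemma hs3: "underS r x \<noteq> {} \<Longrightarrow> \<not>(\<exists>b \<in> underS r x. \<forall>c \<in> underS r x. (c, b) \<in> r) \<Longrightarrow>
  hier_step r h x = (\<Union>b \<in> underS r x. fst (h b), \<Union>b \<in> underS r x. snd (h b))"
  unfolding hier_step_def by (subst if_not_P, assumption, rule if_not_P, assumption)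

lemma the_max:
  assumes an: "antisym r" and ex: "\<exists>b\<in>S. \<forall>c\<in>S. (c, b) \<in> r"
  shows "(THE b. b \<in> S \<and> (\<forall>c\<in>S. (c, b) \<in> r)) \<in> S"
proof -
  obtain b where b: "b \<in> S" "\<forall>c\<in>S. (c, b) \<in> r" using ex by blast
  have "(THE b. b \<in> S \<and> (\<forall>c\<in>S. (c, b) \<in> r)) = b"
  proof (rule the_equality)
    show "b \<in> S \<and> (\<forall>c\<in>S. (c, b) \<in> r)" using b by blast
  next
    fix x assume x: "x \<in> S \<and> (\<forall>c\<in>S. (c, x) \<in> r)"
    hence "(x, b) \<in> r" "(b, x) \<in> r" using b by auto
    thus "x = b" using an by (rule antisymD[rotated])
  qed
  thus ?thesis using b by simp
qed

lemma wo_antisym: "Well_order r \<Longrightarrow> antisym r"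
  by (simp add: well_order_on_def linear_order_on_def partial_order_on_def)

lemma hier_step_cong:
  assumes an: "antisym r" and fg: "\<And>y. y \<in> underS r x \<Longrightarrow> f y = g y"
  shows "hier_step r f x = hier_step r g x"
proof (cases "underS r x = {}")
  case True thus ?thesis by (simp only: hs1)
next
  case ne: False
  show ?thesis
  proof (cases "\<exists>b \<in> underS r x. \<forall>c \<in> underS r x. (c, b) \<in> r")
    case True
    define t where "t = (THE b. b \<in> underS r x \<and> (\<forall>c \<in> underS r x. (c, b) \<in> r))"
    have "t \<in> underS r x" unfolding t_def using the_max[OF an True] .
    hence "f t = g t" using fg by blast
    thus ?thesis using hs2[OF ne True, of f] hs2[OF ne True, of g] unfolding t_def[symmetric] by simp
  next
    case False
    have "(\<Union>b\<in>underS r x. fst (f b)) = (\<Union>b\<in>underS r x. fst (g b))"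
      by (rule SUP_cong) (simp_all add: fg)
    moreover have "(\<Union>b\<in>underS r x. snd (f b)) = (\<Union>b\<in>underS r x. snd (g b))"
      by (rule SUP_cong) (simp_all add: fg)
    ultimately show ?thesis using hs3[OF ne False, of f] hs3[OF ne False, of g] by simp
  qed
qed

lemma hier_unfold:
  assumes "Well_order r"
  shows "hier r x = hier_step r (hier r) x"
proof -
  have wo: "wo_rel r" using assms by (simp add: wo_rel_def)
  have an: "antisym r" using wo_antisym[OF assms] .
  have "wo_rel.adm_wo r (hier_step r)"
    unfolding wo_rel.adm_wo_def[OF wo]
  proof (intro allI impI)
    fix f g :: "_ \<Rightarrow> baire set set \<times> baire set set" and x
    assume "\<forall>y\<in>underS r x. f y = g y"
    thus "hier_step r f x = hier_step r g x" by (intro hier_step_cong[OF an]) blast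
  qed
  hence "wo_rel.worec r (hier_step r) = hier_step r (wo_rel.worec r (hier_step r))"
    by (rule wo_rel.worec_fixpoint[OF wo])
  moreover have "hier r = wo_rel.worec r (hier_step r)"
    by (simp only: wo_rel.worec_def[OF wo] hier_def)
  ultimately show ?thesis by simp
qed

lemma hier_cases:
  assumes "Well_order r"
  shows "(underS r x = {} \<and> PiH r x = algA \<and> SigmaH r x = algA) \<or>
    (\<exists>b \<in> underS r x. PiH r x = PiF (SigmaH r b) \<and> SigmaH r x = SigmaF (PiH r b)) \<or>
    (underS r x \<noteq> {} \<and> PiH r x = (\<Union>b\<in>underS r x. PiH r b) \<and> SigmaH r x = (\<Union>b\<in>underS r x. SigmaH r b))"
proof -
  have H: "hier r x = hier_step r (hier r) x" using hier_unfold[OF assms] .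
  show ?thesis
  proof (cases "underS r x = {}")
    case True thus ?thesis using H hs1[OF True, of "hier r"] by (simp add: PiH_def SigmaH_def)
  next
    case ne: False
    show ?thesis
    proof (cases "\<exists>b \<in> underS r x. \<forall>c \<in> underS r x. (c, b) \<in> r")
      case True
      define t where "t = (THE b. b \<in> underS r x \<and> (\<forall>c \<in> underS r x. (c, b) \<in> r))"
      have tin: "t \<in> underS r x" unfolding t_def using the_max[OF wo_antisym[OF assms] True] .
      have "hier r x = (PiF (SigmaH r t), SigmaF (PiH r t))"
        using H hs2[OF ne True, of "hier r"] unfolding t_def[symmetric] by (simp add: PiH_def SigmaH_def)
      hence "PiH r x = PiF (SigmaH r t) \<and> SigmaH r x = SigmaF (PiH r t)"
        by (simp add: PiH_def SigmaH_def)
      thus ?thesis using tin by blast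
    next
      case False
      thus ?thesis using H ne hs3[OF ne False, of "hier r"] by (simp add: PiH_def SigmaH_def)
    qed
  qed
qed

lemma PiF_sup: "X \<in> S \<Longrightarrow> X \<in> PiF S"
  unfolding PiF_def by (rule CollectI, rule exI[of _ "\<lambda>_. X"]) auto

lemma SigmaF_sup: "X \<in> S \<Longrightarrow> X \<in> SigmaF S"
  unfolding SigmaF_def by (rule CollectI, rule exI[of _ "\<lambda>_. X"]) auto

lemma algA_sub:
  assumes "Well_order r"
  shows "algA \<subseteq> PiH r x \<and> algA \<subseteq> SigmaH r x"
proof -
  have wf: "wf (r - Id)" using assms by (simp add: wo_rel_def wo_rel.WF)
  show ?thesis
  proof (induction x rule: wf_induct[OF wf])
    case (1 x)
    have IH: "algA \<subseteq> PiH r b \<and> algA \<subseteq> SigmaH r b" if "b \<in> underS r x" for b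
      using 1 that by (auto simp: underS_def)
    from hier_cases[OF assms, of x] show ?case
    proof (elim disjE)
      assume "\<exists>b \<in> underS r x. PiH r x = PiF (SigmaH r b) \<and> SigmaH r x = SigmaF (PiH r b)"
      then obtain b where b: "b \<in> underS r x" "PiH r x = PiF (SigmaH r b)" "SigmaH r x = SigmaF (PiH r b)" by blast
      show ?thesis using IH[OF b(1)] b PiF_sup SigmaF_sup by blast
    next
      assume h: "underS r x \<noteq> {} \<and> PiH r x = (\<Union>b\<in>underS r x. PiH r b) \<and> SigmaH r x = (\<Union>b\<in>underS r x. SigmaH r b)"
      then obtain b where "b \<in> underS r x" by blast
      thus ?thesis using h IH by blast
    qed simp
  qed
qed

definition clos :: "baire set set \<Rightarrow> bool" where
  "clos C \<longleftrightarrow> (\<forall>Y. (\<forall>n::nat. Y n \<in> C) \<longrightarrow> \<Inter>(range Y) \<in> C) \<and> (\<forall>Y. (\<forall>n::nat. Y n \<in> C) \<longrightarrow> \<Union>(range Y) \<in> C)"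

definition BB :: "baire set set \<Rightarrow> baire set set" where
  "BB C = {X. X \<in> C \<and> - X \<in> C}"

definition adm :: "baire set set \<Rightarrow> (baire \<Rightarrow> baire) \<Rightarrow> bool" where
  "adm C \<psi> \<longleftrightarrow> (\<forall>m n. \<psi> -` Bset m n \<in> BB C)"

definition good :: "baire set set \<Rightarrow> (baire \<times> baire) set \<Rightarrow> bool" where
  "good C W \<longleftrightarrow> (\<forall>\<psi>. adm C \<psi> \<longrightarrow> {x. (x, \<psi> x) \<in> W} \<in> BB C)"

definition univs :: "baire set set \<Rightarrow> (baire \<times> baire) set \<Rightarrow> bool" where
  "univs F W \<longleftrightarrow> (\<forall>X\<in>F. \<exists>y. X = {x. (x, y) \<in> W})"

lemma closI: "clos C \<Longrightarrow> (\<And>n::nat. Y n \<in> C) \<Longrightarrow> \<Inter>(range Y) \<in> C"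
proof -
  assume c: "clos C" and h: "\<And>n. Y n \<in> C"
  from c have "\<forall>Y. (\<forall>n::nat. Y n \<in> C) \<longrightarrow> \<Inter>(range Y) \<in> C" unfolding clos_def by (rule conjunct1)
  hence "(\<forall>n::nat. Y n \<in> C) \<longrightarrow> \<Inter>(range Y) \<in> C" by (rule spec)
  moreover have "\<forall>n. Y n \<in> C" using h by (rule allI)
  ultimately show ?thesis by (rule mp)
qed

lemma closU: "clos C \<Longrightarrow> (\<And>n::nat. Y n \<in> C) \<Longrightarrow> \<Union>(range Y) \<in> C"
proof -
  assume c: "clos C" and h: "\<And>n. Y n \<in> C"
  from c have "\<forall>Y. (\<forall>n::nat. Y n \<in> C) \<longrightarrow> \<Union>(range Y) \<in> C" unfolding clos_def by (rule conjunct2)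
  hence "(\<forall>n::nat. Y n \<in> C) \<longrightarrow> \<Union>(range Y) \<in> C" by (rule spec)
  moreover have "\<forall>n. Y n \<in> C" using h by (rule allI)
  ultimately show ?thesis by (rule mp)
qed

lemma BB_INT: "clos C \<Longrightarrow> (\<And>n::nat. Y n \<in> BB C) \<Longrightarrow> \<Inter>(range Y) \<in> BB C"
proof -
  assume c: "clos C" and h: "\<And>n. Y n \<in> BB C"
  have h1: "Y n \<in> C" and h2: "- Y n \<in> C" for n using h[of n] unfolding BB_def by auto
  have "\<Inter>(range Y) \<in> C" by (rule closI[OF c h1])
  moreover have "- \<Inter>(range Y) = \<Union>(range (\<lambda>n. - Y n))" by auto
  moreover have "\<Union>(range (\<lambda>n. - Y n)) \<in> C" by (rule closU[OF c h2])
  ultimately show ?thesis unfolding BB_def by simp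
qed

lemma BB_UN: "clos C \<Longrightarrow> (\<And>n::nat. Y n \<in> BB C) \<Longrightarrow> \<Union>(range Y) \<in> BB C"
proof -
  assume c: "clos C" and h: "\<And>n. Y n \<in> BB C"
  have h1: "Y n \<in> C" and h2: "- Y n \<in> C" for n using h[of n] unfolding BB_def by auto
  have "\<Union>(range Y) \<in> C" by (rule closU[OF c h1])
  moreover have "- \<Union>(range Y) = \<Inter>(range (\<lambda>n. - Y n))" by auto
  moreover have "\<Inter>(range (\<lambda>n. - Y n)) \<in> C" by (rule closI[OF c h2])
  ultimately show ?thesis unfolding BB_def by simp
qed

lemma BB_compl: "X \<in> BB C \<Longrightarrow> - X \<in> BB C"
  unfolding BB_def by simp

lemma two_Int: "\<Inter>(range (\<lambda>n::nat. if n = 0 then X else Z)) = X \<inter> Z"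
proof
  show "\<Inter>(range (\<lambda>n::nat. if n = 0 then X else Z)) \<subseteq> X \<inter> Z"
  proof
    fix x assume "x \<in> \<Inter>(range (\<lambda>n::nat. if n = 0 then X else Z))"
    hence "x \<in> (if (0::nat) = 0 then X else Z)" "x \<in> (if (1::nat) = 0 then X else Z)" by blast+
    thus "x \<in> X \<inter> Z" by simp
  qed
next
  show "X \<inter> Z \<subseteq> \<Inter>(range (\<lambda>n::nat. if n = 0 then X else Z))" by auto
qed

lemma two_Un: "\<Union>(range (\<lambda>n::nat. if n = 0 then X else Z)) = X \<union> Z"
proof
  show "X \<union> Z \<subseteq> \<Union>(range (\<lambda>n::nat. if n = 0 then X else Z))"
  proof
    fix x assume "x \<in> X \<union> Z"
    hence "x \<in> (if (0::nat) = 0 then X else Z) \<or> x \<in> (if (1::nat) = 0 then X else Z)" by simp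
    thus "x \<in> \<Union>(range (\<lambda>n::nat. if n = 0 then X else Z))" by blast
  qed
next
  show "\<Union>(range (\<lambda>n::nat. if n = 0 then X else Z)) \<subseteq> X \<union> Z" by auto
qed

lemma BB_Int: "clos C \<Longrightarrow> X \<in> BB C \<Longrightarrow> Z \<in> BB C \<Longrightarrow> X \<inter> Z \<in> BB C"
proof -
  assume c: "clos C" and h: "X \<in> BB C" "Z \<in> BB C"
  have "\<Inter>(range (\<lambda>n::nat. if n = 0 then X else Z)) \<in> BB C"
    by (rule BB_INT[OF c]) (simp add: h)
  thus ?thesis by (simp only: two_Int)
qed

lemma BB_Un: "clos C \<Longrightarrow> X \<in> BB C \<Longrightarrow> Z \<in> BB C \<Longrightarrow> X \<union> Z \<in> BB C"
proof -
  assume c: "clos C" and h: "X \<in> BB C" "Z \<in> BB C"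
  have "\<Union>(range (\<lambda>n::nat. if n = 0 then X else Z)) \<in> BB C"
    by (rule BB_UN[OF c]) (simp add: h)
  thus ?thesis by (simp only: two_Un)
qed

lemma lit_algA: "L \<in> literals \<Longrightarrow> L \<in> algA"
proof -
  assume L: "L \<in> literals"
  have "L \<in> conjs" unfolding conjs_def using L by (intro CollectI exI[of _ "[L]"]) simp
  thus ?thesis unfolding algA_def by (intro CollectI exI[of _ "[L]"]) simp
qed

lemma lit_compl: "L \<in> literals \<Longrightarrow> - L \<in> literals"
proof -
  assume "L \<in> literals"
  then obtain m n where "L = Bset m n \<or> L = - Bset m n" unfolding literals_def by blast
  thus ?thesis
  proof
    assume "L = Bset m n" thus ?thesis unfolding literals_def by blast
  next
    assume "L = - Bset m n" hence "- L = Bset m n" by simp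
    thus ?thesis unfolding literals_def by blast
  qed
qed

lemma algA_BB:
  assumes c: "clos C" and A: "algA \<subseteq> C"
  shows "algA \<subseteq> BB C"
proof -
  have lit: "L \<in> BB C" if "L \<in> literals" for L
    using that lit_algA lit_compl A unfolding BB_def by blast
  have cj: "\<Inter>(set l) \<in> BB C" if "l \<noteq> []" "set l \<subseteq> literals" for l
    using that
  proof (induction l rule: list_nonempty_induct)
    case (single x) thus ?case using lit by simp
  next
    case (cons x xs) thus ?case using lit BB_Int[OF c] by simp
  qed
  have cj2: "X \<in> BB C" if "X \<in> conjs" for X using that cj unfolding conjs_def by blast
  have al: "\<Union>(set l) \<in> BB C" if "l \<noteq> []" "set l \<subseteq> conjs" for l
    using that
  proof (induction l rule: list_nonempty_induct)
    case (single x) thus ?case using cj2 by simp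
  next
    case (cons x xs) thus ?case using cj2 BB_Un[OF c] by simp
  qed
  show ?thesis using al unfolding algA_def by blast
qed

lemma countable_algA: "countable algA"
proof -
  have sub: "literals \<subseteq> range (\<lambda>p::nat\<times>nat. Bset (fst p) (snd p)) \<union> range (\<lambda>p::nat\<times>nat. - Bset (fst p) (snd p))"
  proof
    fix L assume "L \<in> literals"
    then obtain m n where "L = Bset m n \<or> L = - Bset m n" unfolding literals_def by blast
    thus "L \<in> range (\<lambda>p::nat\<times>nat. Bset (fst p) (snd p)) \<union> range (\<lambda>p::nat\<times>nat. - Bset (fst p) (snd p))"
    proof
      assume "L = Bset m n"
      hence "L = (\<lambda>p::nat\<times>nat. Bset (fst p) (snd p)) (m, n)" by simp
      thus ?thesis by blast
    next
      assume "L = - Bset m n"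
      hence "L = (\<lambda>p::nat\<times>nat. - Bset (fst p) (snd p)) (m, n)" by simp
      thus ?thesis by blast
    qed
  qed
  have "countable (range (\<lambda>p::nat\<times>nat. Bset (fst p) (snd p)))" by (rule countable_image) simp
  moreover have "countable (range (\<lambda>p::nat\<times>nat. - Bset (fst p) (snd p)))" by (rule countable_image) simp
  ultimately have cl: "countable literals" using sub countable_Un countable_subset by metis
  have s2: "conjs \<subseteq> (\<lambda>l. \<Inter>(set l)) ` lists literals"
  proof
    fix X assume "X \<in> conjs"
    then obtain l where l: "X = \<Inter>(set l)" "set l \<subseteq> literals" unfolding conjs_def by blast
    have "l \<in> lists literals" using l(2) by (simp add: in_lists_conv_set subset_iff)
    thus "X \<in> (\<lambda>l. \<Inter>(set l)) ` lists literals" using l(1) by (rule rev_image_eqI)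
  qed
  have "countable ((\<lambda>l. \<Inter>(set l)) ` lists literals)" by (rule countable_image) (rule countable_lists[OF cl])
  hence cc: "countable conjs" using s2 by (rule countable_subset[rotated])
  have s3: "algA \<subseteq> (\<lambda>l. \<Union>(set l)) ` lists conjs"
  proof
    fix X assume "X \<in> algA"
    then obtain l where l: "X = \<Union>(set l)" "set l \<subseteq> conjs" unfolding algA_def by blast
    have "l \<in> lists conjs" using l(2) by (simp add: in_lists_conv_set subset_iff)
    thus "X \<in> (\<lambda>l. \<Union>(set l)) ` lists conjs" using l(1) by (rule rev_image_eqI)
  qed
  have "countable ((\<lambda>l. \<Union>(set l)) ` lists conjs)" by (rule countable_image) (rule countable_lists[OF cc])
  thus ?thesis using s3 by (rule countable_subset[rotated])
qed

definition col :: "nat \<Rightarrow> baire \<Rightarrow> baire" where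
  "col n y = (\<lambda>k. y (prod_encode (n, k)))"

definition sh :: "baire \<Rightarrow> baire" where
  "sh y = (\<lambda>k. y (Suc k))"

lemma adm_col: "adm C \<psi> \<Longrightarrow> adm C (\<lambda>z. col n (\<psi> z))"
  unfolding adm_def col_def Bset_def by (simp add: vimage_def)

lemma adm_sh: "adm C \<psi> \<Longrightarrow> adm C (\<lambda>z. sh (\<psi> z))"
  unfolding adm_def sh_def Bset_def by (simp add: vimage_def)

lemma good_base:
  assumes c: "clos C" and e: "\<And>k. e k \<in> BB C"
  shows "good C {(z, y). z \<in> e (y 0)}"
  unfolding good_def
proof (intro allI impI)
  fix \<psi> assume a: "adm C \<psi>"
  have "{x. (x, \<psi> x) \<in> {(z, y). z \<in> e (y 0)}} = \<Union>(range (\<lambda>k. \<psi> -` Bset k 0 \<inter> e k))"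
    by (auto simp: Bset_def)
  moreover have "\<Union>(range (\<lambda>k. \<psi> -` Bset k 0 \<inter> e k)) \<in> BB C"
    using a e BB_UN[OF c] BB_Int[OF c] unfolding adm_def by simp
  ultimately show "{x. (x, \<psi> x) \<in> {(z, y). z \<in> e (y 0)}} \<in> BB C" by (simp only:)
qed

lemma goodD: "good C V \<Longrightarrow> adm C \<phi> \<Longrightarrow> {x. (x, \<phi> x) \<in> V} \<in> BB C"
proof -
  assume g: "good C V" and a: "adm C \<phi>"
  from g have "adm C \<phi> \<longrightarrow> {x. (x, \<phi> x) \<in> V} \<in> BB C" unfolding good_def by (rule spec)
  thus ?thesis using a by (rule mp)
qed

lemma good_cap:
  assumes c: "clos C" and V: "good C V"
  shows "good C {(z, y). \<forall>n. (z, col n y) \<in> V}"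
  unfolding good_def
proof (intro allI impI)
  fix \<psi> assume a: "adm C \<psi>"
  have "{x. (x, \<psi> x) \<in> {(z, y). \<forall>n. (z, col n y) \<in> V}} = \<Inter>(range (\<lambda>n. {x. (x, col n (\<psi> x)) \<in> V}))"
    by auto
  moreover have "\<Inter>(range (\<lambda>n. {x. (x, col n (\<psi> x)) \<in> V})) \<in> BB C"
    by (rule BB_INT[OF c], rule goodD[OF V adm_col[OF a]])
  ultimately show "{x. (x, \<psi> x) \<in> {(z, y). \<forall>n. (z, col n y) \<in> V}} \<in> BB C" by (simp only:)
qed

lemma good_cup:
  assumes c: "clos C" and V: "good C V"
  shows "good C {(z, y). \<exists>n. (z, col n y) \<in> V}"
  unfolding good_def
proof (intro allI impI)
  fix \<psi> assume a: "adm C \<psi>"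
  have "{x. (x, \<psi> x) \<in> {(z, y). \<exists>n. (z, col n y) \<in> V}} = \<Union>(range (\<lambda>n. {x. (x, col n (\<psi> x)) \<in> V}))"
    by auto
  moreover have "\<Union>(range (\<lambda>n. {x. (x, col n (\<psi> x)) \<in> V})) \<in> BB C"
    by (rule BB_UN[OF c], rule goodD[OF V adm_col[OF a]])
  ultimately show "{x. (x, \<psi> x) \<in> {(z, y). \<exists>n. (z, col n y) \<in> V}} \<in> BB C" by (simp only:)
qed

lemma good_lim:
  assumes c: "clos C" and U: "\<And>k. good C (Uf k)"
  shows "good C {(z, y). (z, sh y) \<in> Uf (y 0)}"
  unfolding good_def
proof (intro allI impI)
  fix \<psi> assume a: "adm C \<psi>"
  have "{x. (x, \<psi> x) \<in> {(z, y). (z, sh y) \<in> Uf (y 0)}} = \<Union>(range (\<lambda>k. \<psi> -` Bset k 0 \<inter> {x. (x, sh (\<psi> x)) \<in> Uf k}))"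
    by (auto simp: Bset_def)
  moreover have "\<Union>(range (\<lambda>k. \<psi> -` Bset k 0 \<inter> {x. (x, sh (\<psi> x)) \<in> Uf k})) \<in> BB C"
  proof (rule BB_UN[OF c])
    fix k
    have "\<psi> -` Bset k 0 \<in> BB C" using a unfolding adm_def by blast
    moreover have "{x. (x, sh (\<psi> x)) \<in> Uf k} \<in> BB C" by (rule goodD[OF U adm_sh[OF a]])
    ultimately show "\<psi> -` Bset k 0 \<inter> {x. (x, sh (\<psi> x)) \<in> Uf k} \<in> BB C" by (rule BB_Int[OF c])
  qed
  ultimately show "{x. (x, \<psi> x) \<in> {(z, y). (z, sh y) \<in> Uf (y 0)}} \<in> BB C" by (simp only:)
qed

lemma univ_base: "univs algA {(z, y). z \<in> from_nat_into algA (y 0)}"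
  unfolding univs_def
proof
  fix X assume X: "X \<in> algA"
  obtain k where "from_nat_into algA k = X" using from_nat_into_surj[OF countable_algA X] by (elim exE)
  thus "\<exists>y. X = {x. (x, y) \<in> {(z, y). z \<in> from_nat_into algA (y 0)}}"
    by (intro exI[of _ "\<lambda>_. k"]) simp
qed

lemma col_join: "col n (\<lambda>j. ys (fst (prod_decode j)) (snd (prod_decode j))) = ys n"
  unfolding col_def by simp

lemma univ_cap: "univs F V \<Longrightarrow> univs (PiF F) {(z, y). \<forall>n. (z, col n y) \<in> V}"
  unfolding univs_def
proof
  fix X assume u: "\<forall>X\<in>F. \<exists>y. X = {x. (x, y) \<in> V}" and "X \<in> PiF F"
  then obtain Y :: "nat \<Rightarrow> baire set" where Y: "X = \<Inter>(range Y)" "\<forall>n. Y n \<in> F" unfolding PiF_def by blast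
  have "\<exists>ys. \<forall>n. Y n = {x. (x, ys n) \<in> V}"
    by (rule choice) (use u Y(2) in blast)
  then obtain ys where ys0: "\<forall>n. Y n = {x. (x, ys n) \<in> V}" by blast
  have ys: "Y n = {x. (x, ys n) \<in> V}" for n using ys0 by blast
  show "\<exists>y. X = {x. (x, y) \<in> {(z, y). \<forall>n. (z, col n y) \<in> V}}"
    by (rule exI[of _ "\<lambda>j. ys (fst (prod_decode j)) (snd (prod_decode j))"])
       (auto simp: col_join Y ys)
qed

lemma univ_cup: "univs F V \<Longrightarrow> univs (SigmaF F) {(z, y). \<exists>n. (z, col n y) \<in> V}"
  unfolding univs_def
proof
  fix X assume u: "\<forall>X\<in>F. \<exists>y. X = {x. (x, y) \<in> V}" and "X \<in> SigmaF F"
  then obtain Y :: "nat \<Rightarrow> baire set" where Y: "X = \<Union>(range Y)" "\<forall>n. Y n \<in> F" unfolding SigmaF_def by blast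
  have "\<exists>ys. \<forall>n. Y n = {x. (x, ys n) \<in> V}"
    by (rule choice) (use u Y(2) in blast)
  then obtain ys where ys0: "\<forall>n. Y n = {x. (x, ys n) \<in> V}" by blast
  have ys: "Y n = {x. (x, ys n) \<in> V}" for n using ys0 by blast
  show "\<exists>y. X = {x. (x, y) \<in> {(z, y). \<exists>n. (z, col n y) \<in> V}}"
    by (rule exI[of _ "\<lambda>j. ys (fst (prod_decode j)) (snd (prod_decode j))"])
       (auto simp: col_join Y ys)
qed

lemma univ_lim: "(\<And>k. univs (G k) (Uf k)) \<Longrightarrow> univs (\<Union>k. G k) {(z, y). (z, sh y) \<in> Uf (y 0)}"
  unfolding univs_def
proof
  fix X assume u: "\<And>k. \<forall>X\<in>G k. \<exists>y. X = {x. (x, y) \<in> Uf k}" and "X \<in> (\<Union>k. G k)"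
  then obtain k where "X \<in> G k" by blast
  then obtain y' where y': "X = {x. (x, y') \<in> Uf k}" using u by blast
  have "sh (case_nat k y') = y'" unfolding sh_def by simp
  thus "\<exists>y. X = {x. (x, y) \<in> {(z, y). (z, sh y) \<in> Uf (y 0)}}"
    by (intro exI[of _ "case_nat k y'"]) (simp add: y')
qed


lemma algA_ne: "algA \<noteq> {}"
  using lit_algA[of "Bset 0 0"] unfolding literals_def by blast

lemma main_ind:
  assumes wo: "Well_order r" and cnt: "countable (underS r a)" and c: "clos C" and A: "algA \<subseteq> C"
  shows "(x, a) \<in> r \<longrightarrow> (\<exists>U. good C U \<and> univs (PiH r x) U) \<and> (\<exists>V. good C V \<and> univs (SigmaH r x) V)"
proof -
  have wf: "wf (r - Id)" using wo by (simp add: wo_rel_def wo_rel.WF)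
  have tr: "trans r" and an: "antisym r" using wo
    by (auto simp: well_order_on_def linear_order_on_def partial_order_on_def preorder_on_def)
  have ABB: "algA \<subseteq> BB C" using algA_BB[OF c A] .
  show ?thesis
  proof (induction x rule: wf_induct[OF wf])
    case (1 x)
    show ?case
    proof
      assume xa: "(x, a) \<in> r"
      have sub: "underS r x \<subseteq> underS r a"
      proof
        fix y assume "y \<in> underS r x"
        hence y: "(y, x) \<in> r" "y \<noteq> x" by (auto simp: underS_def)
        have "(y, a) \<in> r" using tr y xa by (meson transD)
        moreover have "y \<noteq> a" using an y xa by (metis antisymD)
        ultimately show "y \<in> underS r a" by (simp add: underS_def)
      qed
      have IH: "(\<exists>U. good C U \<and> univs (PiH r b) U) \<and> (\<exists>V. good C V \<and> univs (SigmaH r b) V)"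
        if "b \<in> underS r x" for b
      proof -
        have "(b, x) \<in> r - Id" using that by (auto simp: underS_def)
        moreover have "(b, a) \<in> r" using that sub by (auto simp: underS_def)
        ultimately show ?thesis using 1 by blast
      qed
      from hier_cases[OF wo, of x] show "(\<exists>U. good C U \<and> univs (PiH r x) U) \<and> (\<exists>V. good C V \<and> univs (SigmaH r x) V)"
      proof (elim disjE)
        assume h: "underS r x = {} \<and> PiH r x = algA \<and> SigmaH r x = algA"
        have "good C {(z, y). z \<in> from_nat_into algA (y 0)}"
          by (rule good_base[OF c]) (use ABB from_nat_into[OF algA_ne] in blast)
        thus ?thesis using h univ_base by auto
      next
        assume "\<exists>b \<in> underS r x. PiH r x = PiF (SigmaH r b) \<and> SigmaH r x = SigmaF (PiH r b)"
        then obtain b where b: "b \<in> underS r x" "PiH r x = PiF (SigmaH r b)" "SigmaH r x = SigmaF (PiH r b)" by blast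
        obtain U V where UV: "good C U" "univs (PiH r b) U" "good C V" "univs (SigmaH r b) V"
          using IH[OF b(1)] by blast
        show ?thesis using good_cap[OF c UV(3)] univ_cap[OF UV(4)] good_cup[OF c UV(1)] univ_cup[OF UV(2)] b
          by auto
      next
        assume h: "underS r x \<noteq> {} \<and> PiH r x = (\<Union>b\<in>underS r x. PiH r b) \<and> SigmaH r x = (\<Union>b\<in>underS r x. SigmaH r b)"
        define S where "S = underS r x"
        define g where "g = from_nat_into S"
        have cS: "countable S" using countable_subset[OF sub cnt] by (simp add: S_def)
        have rg: "range g = S" using cS h by (simp add: g_def S_def)
        have gS: "g k \<in> S" for k using rg by blast
        have "\<forall>b\<in>S. \<exists>U. good C U \<and> univs (PiH r b) U" using IH S_def by blast
        then obtain Uf where Uf: "\<And>b. b \<in> S \<Longrightarrow> good C (Uf b) \<and> univs (PiH r b) (Uf b)" by metis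
        have "\<forall>b\<in>S. \<exists>V. good C V \<and> univs (SigmaH r b) V" using IH S_def by blast
        then obtain Vf where Vf: "\<And>b. b \<in> S \<Longrightarrow> good C (Vf b) \<and> univs (SigmaH r b) (Vf b)" by metis
        have e1: "PiH r x = (\<Union>k. PiH r (g k))" using h unfolding S_def[symmetric] rg[symmetric] by auto
        have e2: "SigmaH r x = (\<Union>k. SigmaH r (g k))" using h unfolding S_def[symmetric] rg[symmetric] by auto
        have "good C {(z, y). (z, sh y) \<in> Uf (g (y 0))}"
          using good_lim[OF c, of "\<lambda>k. Uf (g k)"] Uf gS by blast
        moreover have "univs (PiH r x) {(z, y). (z, sh y) \<in> Uf (g (y 0))}"
          unfolding e1 using univ_lim[of "\<lambda>k. PiH r (g k)" "\<lambda>k. Uf (g k)"] Uf gS by blast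
        moreover have "good C {(z, y). (z, sh y) \<in> Vf (g (y 0))}"
          using good_lim[OF c, of "\<lambda>k. Vf (g k)"] Vf gS by blast
        moreover have "univs (SigmaH r x) {(z, y). (z, sh y) \<in> Vf (g (y 0))}"
          unfolding e2 using univ_lim[of "\<lambda>k. SigmaH r (g k)" "\<lambda>k. Vf (g k)"] Vf gS by blast
        ultimately show ?thesis by blast
      qed
    qed
  qed
qed

lemma diag:
  assumes c: "clos C" and A: "algA \<subseteq> C" and g: "good C U" and u: "univs C U"
  shows False
proof -
  have ABB: "algA \<subseteq> BB C" using algA_BB[OF c A] .
  have "Bset m n \<in> algA" for m n by (rule lit_algA) (auto simp: literals_def)
  hence "adm C (\<lambda>x. x)" using ABB unfolding adm_def by auto
  hence W: "{x. (x, x) \<in> U} \<in> BB C" using g unfolding good_def by auto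
  define D where "D = - {x. (x, x) \<in> U}"
  have "D \<in> C" using BB_compl[OF W] unfolding D_def BB_def by simp
  then obtain y where "D = {x. (x, y) \<in> U}" using u unfolding univs_def by blast
  thus False unfolding D_def by blast
qed

lemma clos_of: assumes "PiF C = C" and "C = SigmaF C" shows "clos C"
  unfolding clos_def
proof (intro conjI allI impI)
  fix Y :: "nat \<Rightarrow> baire set" assume "\<forall>n. Y n \<in> C"
  hence "\<Inter>(range Y) \<in> PiF C" unfolding PiF_def by blast
  thus "\<Inter>(range Y) \<in> C" using assms(1) by simp
next
  fix Y :: "nat \<Rightarrow> baire set" assume "\<forall>n. Y n \<in> C"
  hence "\<Union>(range Y) \<in> SigmaF C" unfolding SigmaF_def by blast
  thus "\<Union>(range Y) \<in> C" using assms(2) by simp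
qed

theorem proposition5p28:
  fixes r :: "'b rel" and a :: 'b
  assumes "Well_order r" and "a \<in> Field r"
    and "(PiF (PiH r a) = PiH r a \<and> PiH r a = SigmaF (PiH r a)) \<or>
         (PiF (SigmaH r a) = SigmaH r a \<and> SigmaH r a = SigmaF (SigmaH r a))"
  shows "\<not> countable (underS r a)"
proof
  assume cnt: "countable (underS r a)"
  have aa: "(a, a) \<in> r" using assms(1,2)
    by (simp add: well_order_on_def linear_order_on_def partial_order_on_def preorder_on_def refl_on_def)
  have As: "algA \<subseteq> PiH r a" "algA \<subseteq> SigmaH r a" using algA_sub[OF assms(1)] by auto
  from assms(3) show False
  proof
    assume h: "PiF (PiH r a) = PiH r a \<and> PiH r a = SigmaF (PiH r a)"
    have c: "clos (PiH r a)" using clos_of h by blast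
    obtain U where "good (PiH r a) U" "univs (PiH r a) U"
      using main_ind[OF assms(1) cnt c As(1), of a] aa by blast
    thus False using diag[OF c As(1)] by blast
  next
    assume h: "PiF (SigmaH r a) = SigmaH r a \<and> SigmaH r a = SigmaF (SigmaH r a)"
    have c: "clos (SigmaH r a)" using clos_of h by blast
    obtain U where "good (SigmaH r a) U" "univs (SigmaH r a) U"
      using main_ind[OF assms(1) cnt c As(2), of a] aa by blast
    thus False using diag[OF c As(2)] by blast
  qed
qed

end
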